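(* Let $\psi\in(-\pi,\pi]$ and $\tau>0$. Then for every $(a,w)\in D_c$ and every $s>0$, $(sa,sw)\in\Gamma_c(\psi;\tau)$ if and only if $s = \frac{1}{\tau}\tau_c(a,w)$ and $\operatorname{Arg}(w) = \psi$.
   Context: $\operatorname{Arg}(w)\in(-\pi,\pi]$ is the principal argument; $\arccos:[-1,1]\to[0,\pi]$. $D_c := \{(a,w)\in\mathbb{R}\times(\mathbb{C}\setminus\{0\}):\operatorname{Re}(w)<a<|w|\}$; $\tau_c(a,w) := \frac{1}{\sqrt{|w|^2-a^2}}[|\operatorname{Arg}(w)|-\arccos(a/|w|)]$. For $\Omega\neq0$ with $\tau\Omega-\psi\notin\pi\mathbb{Z}$: $a(\Omega,\psi;\tau) := -\Omega\cot(\tau\Omega-\psi)$, $\rho(\Omega,\psi;\tau) := -\Omega/\sin(\tau\Omega-\psi)$. $I_c(\psi) := (0,\psi)$ if $\psi\ge0$ and $(\psi,0)$ if $\psi\le0$. $\Gamma_c(\psi;\tau) := \{(a(\Omega,\psi;\tau),\,\rho(\Omega,\psi;\tau)e^{i\psi}) : \tau\Omega\in I_c(\psi)\}\subset\mathbb{R}\times\mathbb{C}$. *)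

theory Defs
  imports "HOL-Analysis.Analysis"
begin

definition D_c :: "(real \<times> complex) set" where
  "D_c = {(a, w). w \<noteq> 0 \<and> Re w < a \<and> a < cmod w}"

definition tau_c :: "real \<Rightarrow> complex \<Rightarrow> real" where
  "tau_c a w = (1 / sqrt ((cmod w)\<^sup>2 - a\<^sup>2)) * (\<bar>Arg w\<bar> - arccos (a / cmod w))"

definition a_fun :: "real \<Rightarrow> real \<Rightarrow> real \<Rightarrow> real" where
  "a_fun \<Omega> \<psi> \<tau> = - \<Omega> * cot (\<tau> * \<Omega> - \<psi>)"

definition rho_fun :: "real \<Rightarrow> real \<Rightarrow> real \<Rightarrow> real" where
  "rho_fun \<Omega> \<psi> \<tau> = - \<Omega> / sin (\<tau> * \<Omega> - \<psi>)"

definition I_c :: "real \<Rightarrow> real set" where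
  "I_c \<psi> = (if \<psi> \<ge> 0 then {0<..<\<psi>} else {\<psi><..<0})"

definition Gamma_c :: "real \<Rightarrow> real \<Rightarrow> (real \<times> complex) set" where
  "Gamma_c \<psi> \<tau> = {(a_fun \<Omega> \<psi> \<tau>, complex_of_real (rho_fun \<Omega> \<psi> \<tau>) * exp (\<i> * complex_of_real \<psi>))
                    | \<Omega>. \<tau> * \<Omega> \<in> I_c \<psi>}"

end

theory Submission
  imports Defs
begin

lemma Re_eq_cos_Arg: "w \<noteq> 0 \<Longrightarrow> Re w = cmod w * cos (Arg w)"
proof -
  assume "w \<noteq> 0"
  then have "w = of_real (cmod w) * exp (\<i> * of_real (Arg w))" by (rule Arg_eq)
  then have "Re w = Re (of_real (cmod w) * exp (\<i> * of_real (Arg w)))" by simp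
  also have "\<dots> = cmod w * cos (Arg w)" by (simp add: Re_exp)
  finally show ?thesis .
qed

lemma fwd:
  fixes \<psi> \<tau> :: real
  assumes "-pi < \<psi>" "\<psi> \<le> pi" "\<tau> > 0"
    and D: "(a, w) \<in> D_c" and sp: "s > 0"
    and mem: "(s * a, complex_of_real s * w) \<in> Gamma_c \<psi> \<tau>"
  shows "s = tau_c a w / \<tau> \<and> Arg w = \<psi>"
proof -
  from D have w0: "w \<noteq> 0" and aRe: "Re w < a" and ac: "a < cmod w" by (auto simp: D_c_def)
  from mem obtain \<Omega> where tO: "\<tau> * \<Omega> \<in> I_c \<psi>"
    and eqa: "s * a = a_fun \<Omega> \<psi> \<tau>"
    and eqw: "complex_of_real s * w = complex_of_real (rho_fun \<Omega> \<psi> \<tau>) * exp (\<i> * complex_of_real \<psi>)"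
    unfolding Gamma_c_def by auto
  define \<theta> where "\<theta> = \<tau> * \<Omega> - \<psi>"
  have key: "0 < \<bar>\<theta>\<bar> \<and> \<bar>\<theta>\<bar> < pi \<and> \<bar>\<psi>\<bar> - \<bar>\<theta>\<bar> = \<tau> * \<bar>\<Omega>\<bar> \<and> \<Omega> * sin \<theta> < 0"
  proof (cases "\<psi> \<ge> 0")
    case True
    with tO have h: "0 < \<tau> * \<Omega>" "\<tau> * \<Omega> < \<psi>" by (auto simp: I_c_def)
    have Op: "\<Omega> > 0" using h(1) assms(3) by (simp add: zero_less_mult_iff)
    have th: "\<theta> < 0" "-\<theta> < pi" using h assms(2) by (auto simp: \<theta>_def)
    have "sin (-\<theta>) > 0" using th by (intro sin_gt_zero) auto
    then have "sin \<theta> < 0" by simp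
    then show ?thesis using Op th h True by (auto simp: \<theta>_def mult_pos_neg)
  next
    case False
    with tO have h: "\<psi> < \<tau> * \<Omega>" "\<tau> * \<Omega> < 0" by (auto simp: I_c_def)
    have On: "\<Omega> < 0" using h(2) assms(3) by (simp add: mult_less_0_iff)
    have th: "\<theta> > 0" "\<theta> < pi" using h assms(1) by (auto simp: \<theta>_def)
    have "sin \<theta> > 0" using th by (intro sin_gt_zero) auto
    then show ?thesis using On th h False by (auto simp: \<theta>_def mult_neg_pos)
  qed
  have sn0: "sin \<theta> \<noteq> 0" using key by auto
  define \<rho> where "\<rho> = rho_fun \<Omega> \<psi> \<tau>"
  have rho: "\<rho> = - \<Omega> / sin \<theta>" by (simp add: \<rho>_def rho_fun_def \<theta>_def)
  have "\<Omega> * sin \<theta> < 0" using key by simp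
  then have rp: "\<rho> > 0" unfolding rho
    by (auto simp: mult_less_0_iff divide_neg_pos divide_pos_neg)
  have eqw': "complex_of_real s * w = complex_of_real \<rho> * exp (\<i> * complex_of_real \<psi>)"
    using eqw by (simp add: \<rho>_def)
  have "cmod (complex_of_real s * w) = \<rho>"
    unfolding eqw' using rp by (simp add: norm_mult)
  then have cm: "s * cmod w = \<rho>" using sp by (simp add: norm_mult)
  have "Arg (complex_of_real s * w) = \<psi>"
    by (rule Arg_unique[OF eqw'[symmetric] rp assms(1,2)])
  then have Aw: "Arg w = \<psi>" using sp by simp
  have "a_fun \<Omega> \<psi> \<tau> = \<rho> * cos \<theta>"
    by (simp add: a_fun_def rho cot_def \<theta>_def)
  then have "s * a = s * (cmod w * cos \<theta>)" using eqa cm by simp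
  then have aeq: "a = cmod w * cos \<theta>" using sp by simp
  have cpos: "cmod w > 0" using w0 by simp
  have "a / cmod w = cos \<bar>\<theta>\<bar>" using aeq cpos by simp
  moreover have "arccos (cos \<bar>\<theta>\<bar>) = \<bar>\<theta>\<bar>" by (rule arccos_cos) (use key in auto)
  ultimately have arc: "arccos (a / cmod w) = \<bar>\<theta>\<bar>" by simp
  have "(cmod w)\<^sup>2 - a\<^sup>2 = (cmod w * \<bar>sin \<theta>\<bar>)\<^sup>2"
    using aeq by (simp add: power_mult_distrib algebra_simps sin_squared_eq)
  then have sq: "sqrt ((cmod w)\<^sup>2 - a\<^sup>2) = cmod w * \<bar>sin \<theta>\<bar>"
    using cpos by simp
  have "\<Omega> = - (\<rho> * sin \<theta>)" using rho sn0 by simp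
  then have "\<bar>\<Omega>\<bar> = \<rho> * \<bar>sin \<theta>\<bar>" using rp by (simp add: abs_mult)
  then have Oabs: "\<bar>\<Omega>\<bar> = s * cmod w * \<bar>sin \<theta>\<bar>" using cm by simp
  have "tau_c a w = (\<tau> * \<bar>\<Omega>\<bar>) / (cmod w * \<bar>sin \<theta>\<bar>)"
    unfolding tau_c_def sq arc Aw using key by simp
  also have "\<dots> = \<tau> * s" using Oabs cpos sn0 by simp
  finally have "s = tau_c a w / \<tau>" using assms(3) by simp
  with Aw show ?thesis by simp
qed

lemma bwd:
  fixes \<psi> \<tau> :: real
  assumes "-pi < \<psi>" "\<psi> \<le> pi" "\<tau> > 0"
    and D: "(a, w) \<in> D_c" and sp: "s > 0"
    and hs: "s = tau_c a w / \<tau>" and Aw: "Arg w = \<psi>"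
  shows "(s * a, complex_of_real s * w) \<in> Gamma_c \<psi> \<tau>"
proof -
  from D have w0: "w \<noteq> 0" and aRe: "Re w < a" and ac: "a < cmod w" by (auto simp: D_c_def)
  define c where "c = cmod w"
  have cpos: "c > 0" using w0 by (simp add: c_def)
  define x where "x = a / c"
  have "Re w \<ge> - c" unfolding c_def using abs_Re_le_cmod[of w] by linarith
  then have x1: "-1 < x" "x < 1" using aRe ac cpos by (auto simp: x_def c_def field_simps)
  define \<alpha> where "\<alpha> = arccos x"
  have al: "0 < \<alpha>" "\<alpha> < pi" using arccos_lt_bounded[OF x1] by (auto simp: \<alpha>_def)
  have cosa: "cos \<alpha> = x" using x1 by (simp add: \<alpha>_def)
  have sina: "sin \<alpha> = sqrt (1 - x\<^sup>2)" using x1 by (simp add: \<alpha>_def sin_arccos)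
  have sapos: "sin \<alpha> > 0" using al by (intro sin_gt_zero) auto
  have ReW: "Re w = c * cos \<psi>" using Re_eq_cos_Arg[OF w0] Aw by (simp add: c_def)
  then have "cos \<bar>\<psi>\<bar> < x" using aRe cpos by (simp add: x_def field_simps)
  then have "arccos x < arccos (cos \<bar>\<psi>\<bar>)"
    using x1 by (intro arccos_less_arccos) auto
  moreover have "arccos (cos \<bar>\<psi>\<bar>) = \<bar>\<psi>\<bar>" by (rule arccos_cos) (use assms in auto)
  ultimately have alpsi: "\<alpha> < \<bar>\<psi>\<bar>" by (simp add: \<alpha>_def)
  have "(c * sin \<alpha>)\<^sup>2 = c\<^sup>2 * (1 - x\<^sup>2)"
    by (simp add: power_mult_distrib sin_squared_eq cosa)
  also have "\<dots> = (cmod w)\<^sup>2 - a\<^sup>2" using cpos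
    by (simp add: x_def c_def power_divide field_simps)
  finally have "(cmod w)\<^sup>2 - a\<^sup>2 = (c * sin \<alpha>)\<^sup>2" by simp
  then have sq: "sqrt ((cmod w)\<^sup>2 - a\<^sup>2) = c * sin \<alpha>" using cpos sapos by simp
  have tc: "tau_c a w = (\<bar>\<psi>\<bar> - \<alpha>) / (c * sin \<alpha>)"
    unfolding tau_c_def sq Aw by (simp add: \<alpha>_def x_def c_def)
  have st: "\<tau> * (s * c * sin \<alpha>) = \<bar>\<psi>\<bar> - \<alpha>"
    using hs tc assms(3) cpos sapos by (simp add: field_simps)
  have aeq: "a = c * cos \<alpha>" using cosa cpos by (simp add: x_def)
  have weq: "complex_of_real s * w = complex_of_real (s * c) * exp (\<i> * complex_of_real \<psi>)"
    using Arg_eq[OF w0] Aw by (simp add: c_def)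
  show ?thesis
  proof (cases "\<psi> \<ge> 0")
    case True
    define \<Omega> where "\<Omega> = s * c * sin \<alpha>"
    have t: "\<tau> * \<Omega> - \<psi> = - \<alpha>" using st True by (simp add: \<Omega>_def)
    have I: "\<tau> * \<Omega> \<in> I_c \<psi>" using t True al alpsi by (auto simp: I_c_def)
    have A: "a_fun \<Omega> \<psi> \<tau> = s * a"
      unfolding a_fun_def t using sapos by (simp add: cot_def \<Omega>_def aeq)
    have R: "rho_fun \<Omega> \<psi> \<tau> = s * c"
      unfolding rho_fun_def t using sapos by (simp add: \<Omega>_def)
    show ?thesis unfolding Gamma_c_def using I A R weq by force
  next
    case False
    define \<Omega> where "\<Omega> = - (s * c * sin \<alpha>)"
    have t: "\<tau> * \<Omega> - \<psi> = \<alpha>" using st False by (simp add: \<Omega>_def)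
    have I: "\<tau> * \<Omega> \<in> I_c \<psi>" using t False al alpsi by (auto simp: I_c_def)
    have A: "a_fun \<Omega> \<psi> \<tau> = s * a"
      unfolding a_fun_def t using sapos by (simp add: cot_def \<Omega>_def aeq)
    have R: "rho_fun \<Omega> \<psi> \<tau> = s * c"
      unfolding rho_fun_def t using sapos by (simp add: \<Omega>_def)
    show ?thesis unfolding Gamma_c_def using I A R weq by force
  qed
qed

theorem mainTheorem18:
  fixes \<psi> \<tau> :: real
  assumes "-pi < \<psi>" "\<psi> \<le> pi" "\<tau> > 0"
  shows "\<forall>a w s. (a, w) \<in> D_c \<longrightarrow> s > 0 \<longrightarrow>
           ((s * a, complex_of_real s * w) \<in> Gamma_c \<psi> \<tau> \<longleftrightarrow>
            (s = tau_c a w / \<tau> \<and> Arg w = \<psi>))"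
  using fwd[OF assms] bwd[OF assms] by blast

end
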